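(* Let $P_{2n+1}$ be the path on $2n+1\geq 5$ vertices with adjacency matrix $A$ and endpoints $u,v$, and let $Q=\mathrm{diag}(Q_1,\dots,Q_n,Q_{n+1},Q_n,\dots,Q_1)$ be any symmetric real potential. Then perfect state transfer from $u$ to $v$ for the Hamiltonian $H = A - Q$ cannot occur, for any values of $Q_1,\dots,Q_{n+1}$.
   Context: With $U(t) = e^{itH}$, perfect state transfer from $u$ to $v$ occurs at time $T$ if $|U(T)_{u,v}|=1$; the claim is that there is no such $T$. *)

theory Defs
  imports Complex_Main "Jordan_Normal_Form.Matrix"
begin

definition path_adj :: "nat \<Rightarrow> real mat" where
  "path_adj N = mat N N (\<lambda>(i, j). if i + 1 = j \<or> j + 1 = i then 1 else 0)"

definition potential :: "nat \<Rightarrow> (nat \<Rightarrow> real) \<Rightarrow> real mat" where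
  "potential N q = mat N N (\<lambda>(i, j). if i = j then q i else 0)"

definition mat_exp :: "complex mat \<Rightarrow> complex mat" where
  "mat_exp M = mat (dim_row M) (dim_col M) (\<lambda>(i, j). \<Sum>k. (M ^\<^sub>m k) $$ (i, j) / of_nat (fact k))"

definition transition :: "real mat \<Rightarrow> real \<Rightarrow> complex mat" where
  "transition H t = mat_exp ((\<i> * complex_of_real t) \<cdot>\<^sub>m map_mat complex_of_real H)"

end

theory Submission
  imports Defs "HOL-Computational_Algebra.Polynomial" "HOL-Computational_Algebra.Fundamental_Theorem_Algebra"
begin


fun Pp :: "(nat \<Rightarrow> real) \<Rightarrow> nat \<Rightarrow> real poly" where
  "Pp q 0 = 1"
| "Pp q (Suc 0) = [:q 0, 1:]"
| "Pp q (Suc (Suc k)) = [:q (Suc k), 1:] * Pp q (Suc k) - Pp q k"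

fun Cp :: "(nat \<Rightarrow> real) \<Rightarrow> nat \<Rightarrow> complex poly" where
  "Cp q 0 = 1"
| "Cp q (Suc 0) = [:of_real (q 0), 1:]"
| "Cp q (Suc (Suc k)) = [:of_real (q (Suc k)), 1:] * Cp q (Suc k) - Cp q k"

lemma Pp_deg: "degree (Pp q k) = k \<and> coeff (Pp q k) k = 1"
proof (induction q k rule: Pp.induct)
  case (3 q k)
  let ?A = "[:q (Suc k), 1:] * Pp q (Suc k)"
  have nz: "Pp q (Suc k) \<noteq> 0" using 3 by auto
  have dA: "degree ?A = Suc (Suc k)" using 3 nz by (subst degree_mult_eq) auto
  have cA: "coeff ?A (Suc (Suc k)) = 1" using 3 by (simp add: coeff_eq_0)
  have "degree (?A - Pp q k) = Suc (Suc k)"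
    using dA 3 unfolding diff_conv_add_uminus by (subst degree_add_eq_left) auto
  moreover have "coeff (?A - Pp q k) (Suc (Suc k)) = 1"
    using cA 3 by (simp add: coeff_eq_0)
  ultimately show ?case by simp
qed auto

lemma Cp_deg: "degree (Cp q k) = k \<and> coeff (Cp q k) k = 1"
proof (induction q k rule: Cp.induct)
  case (3 q k)
  let ?A = "[:of_real (q (Suc k)), 1:] * Cp q (Suc k)"
  have nz: "Cp q (Suc k) \<noteq> 0" using 3 by auto
  have dA: "degree ?A = Suc (Suc k)" using 3 nz by (subst degree_mult_eq) auto
  have cA: "coeff ?A (Suc (Suc k)) = 1" using 3 by (simp add: coeff_eq_0)
  have "degree (?A - Cp q k) = Suc (Suc k)"
    using dA 3 unfolding diff_conv_add_uminus by (subst degree_add_eq_left) auto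
  moreover have "coeff (?A - Cp q k) (Suc (Suc k)) = 1"
    using cA 3 by (simp add: coeff_eq_0)
  ultimately show ?case by simp
qed auto

lemma Cp_Pp: "poly (Cp q k) (of_real x) = of_real (poly (Pp q k) x)
   \<and> poly (pderiv (Cp q k)) (of_real x) = of_real (poly (pderiv (Pp q k)) x)"
  by (induction q k rule: Pp.induct) (auto simp: pderiv_add pderiv_diff pderiv_smult pderiv_mult pderiv_pCons algebra_simps)

lemma Pp_rec: "poly (Pp q (Suc (Suc k))) x = (x + q (Suc k)) * poly (Pp q (Suc k)) x - poly (Pp q k) x"
  by (simp add: algebra_simps)

lemma Cp_rec: "poly (Cp q (Suc (Suc k))) x = (x + of_real (q (Suc k))) * poly (Cp q (Suc k)) x - poly (Cp q k) x"
  by (simp add: algebra_simps)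

lemma CD_step: "pderiv L = 1 \<Longrightarrow> pderiv (L*A - B) * A - (L*A - B) * pderiv A = A^2 + (pderiv A * B - A * pderiv (B::real poly))"
  by (simp add: pderiv_mult pderiv_diff algebra_simps power2_eq_square)

lemma CD: "pderiv (Pp q (Suc m)) * Pp q m - Pp q (Suc m) * pderiv (Pp q m) = (\<Sum>k\<le>m. (Pp q k)^2)"
proof (induction m)
  case 0 then show ?case by (simp add: pderiv_pCons)
next
  case (Suc m)
  have L: "pderiv [:q (Suc m), 1:] = 1" by (simp add: pderiv_pCons)
  have "pderiv (Pp q (Suc (Suc m))) * Pp q (Suc m) - Pp q (Suc (Suc m)) * pderiv (Pp q (Suc m))
      = (Pp q (Suc m))^2 + (pderiv (Pp q (Suc m)) * Pp q m - Pp q (Suc m) * pderiv (Pp q m))"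
    unfolding Pp.simps(3) by (rule CD_step[OF L])
  then show ?case using Suc by simp
qed

lemma CDc: "(z - cnj z) * (\<Sum>k\<le>m. poly (Cp q k) z * cnj (poly (Cp q k) z))
   = poly (Cp q (Suc m)) z * cnj (poly (Cp q m) z) - cnj (poly (Cp q (Suc m)) z) * poly (Cp q m) z"
proof (induction m)
  case 0 then show ?case by (simp add: algebra_simps)
next
  case (Suc m)
  show ?case
    apply (simp only: sum.atMost_Suc distrib_left Suc Cp_rec complex_cnj_diff complex_cnj_mult complex_cnj_add complex_cnj_complex_of_real)
    by (simp add: algebra_simps)
qed




lemma prod_lin_basic:
  fixes S :: "real set"
  assumes "finite S"
  shows "degree (\<Prod>r\<in>S. [:-r, 1:]) = card S \<and> coeff (\<Prod>r\<in>S. [:-r, 1:]) (card S) = 1"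
  using assms
proof (induction S rule: finite_induct)
  case (insert a S)
  let ?P = "\<Prod>r\<in>S. [:-r, 1:]"
  let ?Q = "\<Prod>r\<in>insert a S. [:-r, 1:]"
  have nz: "?P \<noteq> 0" using insert by auto
  have e: "?Q = [:-a,1:] * ?P" by (rule prod.insert[OF insert(1,2)])
  have c: "card (insert a S) = Suc (card S)" using insert by simp
  have d: "degree ?Q = Suc (card S)" unfolding e using nz insert by (subst degree_mult_eq) auto
  have l: "lead_coeff ?Q = 1" unfolding e lead_coeff_mult using insert by simp
  have l': "coeff ?Q (Suc (card S)) = 1" using l d by metis
  show ?case unfolding c using d l' by blast
qed auto

lemma prod_lin_coeff1:
  fixes S :: "real set"
  assumes "finite S" "card S = Suc c"
  shows "coeff (\<Prod>r\<in>S. [:-r, 1:]) c = - (\<Sum>r\<in>S. r)"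
  using assms
proof (induction S arbitrary: c rule: finite_induct)
  case (insert a S)
  then have cS: "card S = c" by simp
  show ?case
  proof (cases c)
    case 0
    then have "S = {}" using cS insert by auto
    then show ?thesis using 0 by simp
  next
    case (Suc c')
    have t: "coeff (\<Prod>r\<in>S. [:-r, 1:]) (Suc c') = 1" using prod_lin_basic[OF insert(1)] cS Suc by simp
    have "coeff ([:-a,1:] * (\<Prod>r\<in>S. [:-r, 1:])) (Suc c') = coeff (\<Prod>r\<in>S. [:-r, 1:]) c' - a * coeff (\<Prod>r\<in>S. [:-r, 1:]) (Suc c')"
      by simp
    then show ?thesis using insert.IH[of c'] cS Suc t insert by simp
  qed
qed auto

lemma prod_lin_coeff2:
  fixes S :: "real set"
  assumes "finite S" "card S = Suc (Suc c)"
  shows "coeff (\<Prod>r\<in>S. [:-r, 1:]) c = ((\<Sum>r\<in>S. r)^2 - (\<Sum>r\<in>S. r^2)) / 2"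
  using assms
proof (induction S arbitrary: c rule: finite_induct)
  case (insert a S)
  then have cS: "card S = Suc c" by simp
  show ?case
  proof (cases c)
    case 0
    then obtain b where "S = {b}" using cS by (auto simp: card_Suc_eq)
    then show ?thesis using insert by (simp add: power2_eq_square algebra_simps)
  next
    case (Suc c')
    have t: "coeff (\<Prod>r\<in>S. [:-r, 1:]) (Suc c') = - (\<Sum>r\<in>S. r)"
      using prod_lin_coeff1[OF insert(1)] cS Suc by simp
    have "coeff ([:-a,1:] * (\<Prod>r\<in>S. [:-r, 1:])) (Suc c') = coeff (\<Prod>r\<in>S. [:-r, 1:]) c' - a * coeff (\<Prod>r\<in>S. [:-r, 1:]) (Suc c')"
      by simp
    then show ?thesis using insert.IH[of c'] cS Suc t insert
      by (simp add: power2_eq_square algebra_simps add_divide_distrib diff_divide_distrib)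
  qed
qed auto

lemma monic_split:
  fixes p :: "real poly"
  assumes "finite S" "card S = degree p" "coeff p (degree p) = 1" "\<And>x. x \<in> S \<Longrightarrow> poly p x = 0"
  shows "p = (\<Prod>r\<in>S. [:-r, 1:])"
  using prod_lin_basic[OF assms(1)] assms
  by (intro poly_eqI_degree_lead_coeff[where n="card S" and A=S]) (auto simp: poly_prod)

definition Zs :: "(nat \<Rightarrow> real) \<Rightarrow> nat \<Rightarrow> real set" where
  "Zs q m = {x. poly (Pp q m) x = 0}"

lemma Pp_nz: "Pp q m \<noteq> 0" using Pp_deg[of q m] by auto
lemma Cp_nz: "Cp q m \<noteq> 0" using Cp_deg[of q m] by auto

lemma Zs_finite: "finite (Zs q m)" unfolding Zs_def by (rule poly_roots_finite[OF Pp_nz])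

lemma Cp_root_real:
  assumes "poly (Cp q m) z = 0"
  shows "cnj z = z"
proof (cases m)
  case 0 then show ?thesis using assms by simp
next
  case (Suc k)
  let ?S = "\<Sum>j\<le>k. poly (Cp q j) z * cnj (poly (Cp q j) z)"
  have "(z - cnj z) * ?S = 0" using CDc[where z=z and m=k and q=q] assms Suc by simp
  moreover have "?S \<noteq> 0"
  proof -
    have "Re ?S = (\<Sum>j\<le>k. (Re (poly (Cp q j) z))^2 + (Im (poly (Cp q j) z))^2)"
      by (simp add: complex_mult_cnj)
    also have "\<dots> \<ge> (Re (poly (Cp q 0) z))^2 + (Im (poly (Cp q 0) z))^2"
      by (rule member_le_sum) auto
    finally have r1: "Re ?S \<ge> 1" by simp
    show ?thesis
    proof
      assume "?S = 0"
      then have "Re ?S = 0" by simp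
      then show False using r1 by simp
    qed
  qed
  ultimately show ?thesis by simp
qed

lemma Pp_root_deriv:
  assumes "poly (Pp q m) x = 0"
  shows "poly (pderiv (Pp q m)) x * poly (Pp q (m - 1)) x > 0"
proof (cases m)
  case 0 then show ?thesis using assms by simp
next
  case (Suc k)
  have "poly (pderiv (Pp q (Suc k)) * Pp q k - Pp q (Suc k) * pderiv (Pp q k)) x = poly (\<Sum>j\<le>k. (Pp q j)^2) x"
    by (subst CD) simp
  then have e: "poly (pderiv (Pp q (Suc k))) x * poly (Pp q k) x = (\<Sum>j\<le>k. (poly (Pp q j) x)^2)"
    using assms Suc by (simp add: poly_sum)
  have "(\<Sum>j\<le>k. (poly (Pp q j) x)^2) \<ge> (poly (Pp q 0) x)^2"
    by (rule member_le_sum) auto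
  then show ?thesis using e Suc by simp
qed

lemma cnj_real: "cnj z = z \<Longrightarrow> z = of_real (Re z)"
proof -
  assume "cnj z = z"
  then have "Im (cnj z) = Im z" by simp
  then have "Im z = 0" by simp
  then show ?thesis by (simp add: complex_eq_iff)
qed

lemma Cp_rsquarefree: "rsquarefree (Cp q m)"
  unfolding rsquarefree_roots
proof (intro allI notI)
  fix a assume h: "poly (Cp q m) a = 0 \<and> poly (pderiv (Cp q m)) a = 0"
  have ar: "a = of_real (Re a)" using Cp_root_real[of q m a] h cnj_real by blast 
  have h1: "poly (Cp q m) (of_real (Re a)) = 0" using h ar by metis
  have h2: "poly (pderiv (Cp q m)) (of_real (Re a)) = 0" using h ar by metis
  have "poly (Pp q m) (Re a) = 0" using h1 Cp_Pp[of q m "Re a"] by simp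
  moreover have "poly (pderiv (Pp q m)) (Re a) = 0" using h2 Cp_Pp[of q m "Re a"] by simp
  ultimately show False using Pp_root_deriv[of q m "Re a"] by simp
qed

lemma Zs_card: "card (Zs q m) = m"
proof -
  let ?Zc = "{z. poly (Cp q m) z = 0}"
  have fc: "finite ?Zc" by (rule poly_roots_finite[OF Cp_nz])
  have "smult (lead_coeff (Cp q m)) (\<Prod>z\<in>?Zc. [:-z, 1:] ^ order z (Cp q m)) = Cp q m"
    by (rule complex_poly_decompose)
  moreover have "lead_coeff (Cp q m) = 1" using Cp_deg[of q m] by simp
  moreover have "(\<Prod>z\<in>?Zc. [:-z, 1:] ^ order z (Cp q m)) = (\<Prod>z\<in>?Zc. [:-z, 1:])"
    using rsquarefree_root_order[OF Cp_rsquarefree _ Cp_nz] by (intro prod.cong) auto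
  ultimately have e: "Cp q m = (\<Prod>z\<in>?Zc. [:-z, 1:])" by simp
  have "degree (\<Prod>z\<in>?Zc. [:-z, 1::complex:]) = card ?Zc"
    using fc by (subst degree_prod_eq_sum_degree) auto
  then have c1: "card ?Zc = m" using e Cp_deg[of q m] by simp
  have "?Zc = complex_of_real ` Zs q m"
  proof (intro equalityI subsetI)
    fix z assume "z \<in> ?Zc"
    then have h: "poly (Cp q m) z = 0" by simp
    have zr: "z = of_real (Re z)" using Cp_root_real[OF h] cnj_real by blast
    have h1: "poly (Cp q m) (of_real (Re z)) = 0" using h zr by metis
    have "poly (Pp q m) (Re z) = 0" using h1 Cp_Pp[of q m "Re z"] by simp
    then show "z \<in> complex_of_real ` Zs q m" using zr unfolding Zs_def by blast
  next
    fix z assume "z \<in> complex_of_real ` Zs q m"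
    then obtain x where "z = of_real x" "poly (Pp q m) x = 0" unfolding Zs_def by blast
    then show "z \<in> ?Zc" using Cp_Pp[of q m x] by simp
  qed
  then have "card ?Zc = card (Zs q m)" by (simp add: card_image inj_on_def)
  then show ?thesis using c1 by simp
qed

lemma Pp_split: "Pp q m = (\<Prod>r\<in>Zs q m. [:-r, 1:])"
  using Pp_deg[of q m] Zs_card[of q m] Zs_finite[of q m]
  by (intro monic_split) (auto simp: Zs_def)




definition Hm :: "(nat \<Rightarrow> real) \<Rightarrow> nat \<Rightarrow> real mat" where
  "Hm q N = path_adj N - potential N q"

lemma Hm_carrier: "Hm q N \<in> carrier_mat N N"
  unfolding carrier_mat_def Hm_def path_adj_def potential_def by simp

lemma Hm_entry: "i < N \<Longrightarrow> j < N \<Longrightarrow>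
  Hm q N $$ (i,j) = (if i+1=j \<or> j+1=i then 1 else 0) - (if i = j then q i else 0)"
  by (simp add: Hm_def path_adj_def potential_def)

lemma mult_entry:
  fixes A B :: "'a::comm_semiring_0 mat"
  assumes "A \<in> carrier_mat N N" "B \<in> carrier_mat N N" "i < N" "j < N"
  shows "(A * B) $$ (i,j) = (\<Sum>m<N. A $$ (i,m) * B $$ (m,j))"
  using assms by (simp add: index_mult_mat scalar_prod_def lessThan_atLeast0)

lemma Pp_rec_all: "poly (Pp q (Suc i)) x = (x + q i) * poly (Pp q i) x - (if i = 0 then 0 else poly (Pp q (i-1)) x)"
  by (cases i) (simp_all add: algebra_simps)

lemma sum_adj:
  fixes f :: "nat \<Rightarrow> real"
  assumes "i < N"
  shows "(\<Sum>l<N. (if i+1=l \<or> l+1=i then 1 else 0) * f l) =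
     (if i+1 < N then f (i+1) else 0) + (if i = 0 then 0 else f (i-1))"
proof -
  have "(\<Sum>l<N. (if i+1=l \<or> l+1=i then 1 else 0) * f l) =
        (\<Sum>l<N. (if l = i+1 then f l else 0)) + (\<Sum>l<N. (if i > 0 \<and> l = i-1 then f l else 0))"
    by (subst sum.distrib[symmetric]) (intro sum.cong, auto)
  also have "(\<Sum>l<N. (if l = i+1 then f l else 0)) = (if i+1 < N then f (i+1) else 0)"
    by (simp add: sum.delta')
  also have "(\<Sum>l<N. (if i > 0 \<and> l = i-1 then f l else 0)) = (if i = 0 then 0 else f (i-1))"
    using assms by (cases "i = 0") (simp_all add: sum.delta')
  finally show ?thesis .
qed

lemma Hm_eigen:
  assumes "poly (Pp q N) x = 0" "i < N"
  shows "(\<Sum>l<N. Hm q N $$ (i,l) * poly (Pp q l) x) = x * poly (Pp q i) x"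
proof -
  have "(\<Sum>l<N. Hm q N $$ (i,l) * poly (Pp q l) x) =
     (\<Sum>l<N. (if i+1=l \<or> l+1=i then 1 else 0) * poly (Pp q l) x) - (\<Sum>l<N. (if i = l then q i else 0) * poly (Pp q l) x)"
    using assms(2) by (subst sum_subtractf[symmetric]) (intro sum.cong, auto simp: Hm_entry left_diff_distrib)
  also have "(\<Sum>l<N. (if i = l then q i else 0) * poly (Pp q l) x) = (\<Sum>l<N. if i = l then q i * poly (Pp q l) x else 0)"
    by (intro sum.cong) auto
  also have "\<dots> = q i * poly (Pp q i) x"
    using assms(2) by (simp add: sum.delta)
  also have "(\<Sum>l<N. (if i+1=l \<or> l+1=i then 1 else 0) * poly (Pp q l) x) =
     (if i+1 < N then poly (Pp q (i+1)) x else 0) + (if i = 0 then 0 else poly (Pp q (i-1)) x)"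
    by (rule sum_adj[OF assms(2)])
  also have "(if i+1 < N then poly (Pp q (i+1)) x else 0) = poly (Pp q (Suc i)) x"
  proof (cases "i+1 < N")
    case False
    then have "Suc i = N" using assms(2) by simp
    then show ?thesis using assms(1) False by simp
  qed simp
  finally show ?thesis by (simp add: Pp_rec_all algebra_simps)
qed

lemma Hm_pow_eigen:
  assumes "poly (Pp q N) x = 0" "i < N"
  shows "(\<Sum>l<N. (Hm q N ^\<^sub>m k) $$ (i,l) * poly (Pp q l) x) = x^k * poly (Pp q i) x"
  using assms(2)
proof (induction k arbitrary: i)
  case 0
  have "(\<Sum>l<N. (Hm q N ^\<^sub>m 0) $$ (i,l) * poly (Pp q l) x) = (\<Sum>l<N. if i = l then poly (Pp q l) x else 0)"
    using 0 Hm_carrier[of q N] by (intro sum.cong) auto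
  also have "\<dots> = poly (Pp q i) x" using 0 by (simp add: sum.delta)
  finally show ?case by simp
next
  case (Suc k)
  have C: "Hm q N ^\<^sub>m k \<in> carrier_mat N N" using Hm_carrier by (rule pow_carrier_mat)
  have "(\<Sum>l<N. (Hm q N ^\<^sub>m Suc k) $$ (i,l) * poly (Pp q l) x)
      = (\<Sum>l<N. (\<Sum>m<N. (Hm q N ^\<^sub>m k) $$ (i,m) * Hm q N $$ (m,l)) * poly (Pp q l) x)"
    using Suc.prems C Hm_carrier by (intro sum.cong) (simp_all add: mult_entry[where N=N])
  also have "\<dots> = (\<Sum>m<N. (Hm q N ^\<^sub>m k) $$ (i,m) * (\<Sum>l<N. Hm q N $$ (m,l) * poly (Pp q l) x))"
    by (simp add: sum_distrib_left sum_distrib_right mult.assoc) (rule sum.swap)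
  also have "\<dots> = (\<Sum>m<N. (Hm q N ^\<^sub>m k) $$ (i,m) * (x * poly (Pp q m) x))"
    using Hm_eigen[OF assms(1)] by (intro sum.cong) auto
  also have "\<dots> = x * (\<Sum>m<N. (Hm q N ^\<^sub>m k) $$ (i,m) * poly (Pp q m) x)"
    by (simp add: sum_distrib_left algebra_simps)
  finally show ?case using Suc by simp
qed

lemma dd_lemma:
  fixes Z :: "real set" and f :: "real poly"
  assumes fin: "finite Z" and cZ: "card Z = Suc d" and df: "degree f \<le> d"
  shows "(\<Sum>y\<in>Z. poly f y / poly (pderiv (\<Prod>r\<in>Z. [:-r, 1:])) y) = coeff f d"
proof -
  define L where "L y = (\<Prod>r\<in>Z - {y}. [:-r, 1:])" for y
  have Lb: "degree (L y) = d \<and> coeff (L y) d = 1" if "y \<in> Z" for y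
    using prod_lin_basic[of "Z - {y}"] fin cZ that unfolding L_def by simp
  have Lv: "poly (L y) y \<noteq> 0" if "y \<in> Z" for y
    using fin unfolding L_def by (simp add: poly_prod)
  have Lz: "poly (L y) z = 0" if "y \<in> Z" "z \<in> Z" "z \<noteq> y" for y z
    using fin that unfolding L_def poly_prod by (intro prod_zero_iff[THEN iffD2]) auto
  have pd: "poly (pderiv (\<Prod>r\<in>Z. [:-r, 1:])) y = poly (L y) y" if "y \<in> Z" for y
  proof -
    have "pderiv (\<Prod>r\<in>Z. [:-r, 1:]) = (\<Sum>a\<in>Z. L a)"
      unfolding pderiv_prod L_def by (simp add: pderiv_pCons)
    then have "poly (pderiv (\<Prod>r\<in>Z. [:-r, 1:])) y = (\<Sum>a\<in>Z. poly (L a) y)" by (simp add: poly_sum)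
    also have "\<dots> = poly (L y) y + (\<Sum>a\<in>Z - {y}. poly (L a) y)"
      by (rule sum.remove[OF fin that])
    also have "(\<Sum>a\<in>Z - {y}. poly (L a) y) = 0"
      using that Lz by (intro sum.neutral) auto
    finally show ?thesis by simp
  qed
  define g where "g = (\<Sum>y\<in>Z. smult (poly f y / poly (L y) y) (L y))"
  have gv: "poly g z = poly f z" if "z \<in> Z" for z
  proof -
    have "poly g z = (\<Sum>y\<in>Z. poly f y / poly (L y) y * poly (L y) z)"
      unfolding g_def by (simp add: poly_sum)
    also have "\<dots> = poly f z / poly (L z) z * poly (L z) z + (\<Sum>y\<in>Z - {z}. poly f y / poly (L y) y * poly (L y) z)"
      by (rule sum.remove[OF fin that])
    also have "(\<Sum>y\<in>Z - {z}. poly f y / poly (L y) y * poly (L y) z) = 0"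
      using that Lz by (intro sum.neutral) auto
    finally show ?thesis using Lv[OF that] by simp
  qed
  have dg: "degree g \<le> d"
    unfolding g_def using fin Lb by (intro degree_sum_le) (auto intro: order.trans[OF degree_smult_le])
  have fg: "f = g"
    using gv dg df cZ by (intro poly_eqI_degree[where A=Z]) auto
  have "coeff g d = (\<Sum>y\<in>Z. poly f y / poly (L y) y)"
    unfolding g_def using Lb by (simp add: coeff_sum)
  then show ?thesis using fg pd by simp
qed




lemma Hpow_corner:
  assumes N: "N = Suc d"
  shows "(Hm q N ^\<^sub>m k) $$ (0, d) = (\<Sum>y\<in>Zs q N. (1 / poly (pderiv (Pp q N)) y) * y^k)"
proof -
  have dd: "(\<Sum>y\<in>Zs q N. poly (Pp q l) y / poly (pderiv (Pp q N)) y) = (if l = d then 1 else 0)"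
    if "l < N" for l
  proof -
    have "(\<Sum>y\<in>Zs q N. poly (Pp q l) y / poly (pderiv (Pp q N)) y) = coeff (Pp q l) d"
      using dd_lemma[OF Zs_finite, of q N d "Pp q l"] Zs_card[of q N] N that Pp_deg[of q l]
      by (simp add: Pp_split[symmetric])
    also have "\<dots> = (if l = d then 1 else 0)"
      using Pp_deg[of q l] that N by (auto intro: coeff_eq_0)
    finally show ?thesis .
  qed
  have "(Hm q N ^\<^sub>m k) $$ (0, d) = (\<Sum>l<N. (Hm q N ^\<^sub>m k) $$ (0, l) * (if l = d then 1 else 0))"
    using N by (simp add: sum.delta' cong: if_cong)
  also have "\<dots> = (\<Sum>l<N. (Hm q N ^\<^sub>m k) $$ (0, l) * (\<Sum>y\<in>Zs q N. poly (Pp q l) y / poly (pderiv (Pp q N)) y))"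
    using dd by (intro sum.cong) auto
  also have "\<dots> = (\<Sum>y\<in>Zs q N. (1 / poly (pderiv (Pp q N)) y) * (\<Sum>l<N. (Hm q N ^\<^sub>m k) $$ (0, l) * poly (Pp q l) y))"
    by (simp add: sum_distrib_left sum_distrib_right) (subst sum.swap, intro sum.cong, auto)
  also have "\<dots> = (\<Sum>y\<in>Zs q N. (1 / poly (pderiv (Pp q N)) y) * y^k)"
    using Hm_pow_eigen[of q N _ 0 k] N by (intro sum.cong) (auto simp: Zs_def)
  finally show ?thesis .
qed

definition Mc :: "(nat \<Rightarrow> real) \<Rightarrow> nat \<Rightarrow> real \<Rightarrow> complex mat" where
  "Mc q N T = (\<i> * complex_of_real T) \<cdot>\<^sub>m map_mat complex_of_real (Hm q N)"

lemma Mc_carrier: "Mc q N T \<in> carrier_mat N N"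
  unfolding Mc_def using Hm_carrier[of q N] by simp

lemma Mc_pow: "i < N \<Longrightarrow> j < N \<Longrightarrow>
  (Mc q N T ^\<^sub>m k) $$ (i,j) = (\<i> * complex_of_real T)^k * of_real ((Hm q N ^\<^sub>m k) $$ (i,j))"
proof (induction k arbitrary: j)
  case 0
  then show ?case using Mc_carrier[of q N T] Hm_carrier[of q N] by simp
next
  case (Suc k)
  have C1: "Mc q N T ^\<^sub>m k \<in> carrier_mat N N" using Mc_carrier by (rule pow_carrier_mat)
  have C2: "Hm q N ^\<^sub>m k \<in> carrier_mat N N" using Hm_carrier by (rule pow_carrier_mat)
  have "(Mc q N T ^\<^sub>m Suc k) $$ (i,j) = (\<Sum>m<N. (Mc q N T ^\<^sub>m k) $$ (i,m) * Mc q N T $$ (m,j))"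
    using Suc.prems C1 Mc_carrier by (simp add: mult_entry[where N=N])
  also have "\<dots> = (\<Sum>m<N. (\<i> * complex_of_real T)^(Suc k) * of_real ((Hm q N ^\<^sub>m k) $$ (i,m) * Hm q N $$ (m,j)))"
    using Suc Hm_carrier[of q N] by (intro sum.cong) (auto simp: Mc_def)
  also have "\<dots> = (\<i> * complex_of_real T)^(Suc k) * of_real ((Hm q N ^\<^sub>m Suc k) $$ (i,j))"
    using Suc.prems C2 Hm_carrier by (simp add: mult_entry[where N=N] sum_distrib_left)
  finally show ?case .
qed

lemma exp_sums: "(\<lambda>k. a * (z^k / of_nat (fact k))) sums (a * exp (z::complex))"
proof -
  have "(\<lambda>k. z^k / of_nat (fact k)) sums exp z"
    using exp_converges[of z] by (simp add: scaleR_conv_of_real field_simps)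
  from sums_mult[OF this, of a] show ?thesis .
qed

lemma corner_formula:
  assumes N: "N = Suc d"
  shows "transition (Hm q N) T $$ (0, d) =
     (\<Sum>y\<in>Zs q N. complex_of_real (1 / poly (pderiv (Pp q N)) y) * exp (\<i> * complex_of_real T * complex_of_real y))"
proof -
  let ?c = "\<lambda>y. 1 / poly (pderiv (Pp q N)) y"
  let ?a = "\<i> * complex_of_real T"
  have dims: "dim_row (Mc q N T) = N" "dim_col (Mc q N T) = N" using Mc_carrier[of q N T] by auto
  have "transition (Hm q N) T = mat_exp (Mc q N T)" unfolding transition_def Mc_def by simp
  then have e: "transition (Hm q N) T $$ (0, d) = (\<Sum>k. (Mc q N T ^\<^sub>m k) $$ (0, d) / of_nat (fact k))"
    unfolding mat_exp_def using dims N by (simp only: index_mat) simp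
  have t: "(Mc q N T ^\<^sub>m k) $$ (0, d) / of_nat (fact k) =
     (\<Sum>y\<in>Zs q N. complex_of_real (?c y) * ((?a * complex_of_real y)^k / of_nat (fact k)))" for k
  proof -
    have "(Mc q N T ^\<^sub>m k) $$ (0, d) = ?a^k * of_real ((Hm q N ^\<^sub>m k) $$ (0, d))"
      using N by (intro Mc_pow) auto
    also have "(Hm q N ^\<^sub>m k) $$ (0, d) = (\<Sum>y\<in>Zs q N. ?c y * y^k)"
      by (rule Hpow_corner[OF N])
    also have "?a^k * complex_of_real (\<Sum>y\<in>Zs q N. ?c y * y^k) = (\<Sum>y\<in>Zs q N. complex_of_real (?c y) * (?a * complex_of_real y)^k)"
      by (simp only: of_real_sum sum_distrib_left of_real_mult of_real_power power_mult_distrib mult_ac)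
    finally show ?thesis by (simp only: sum_divide_distrib times_divide_eq_right)
  qed
  have "(\<lambda>k. (Mc q N T ^\<^sub>m k) $$ (0, d) / of_nat (fact k)) sums
     (\<Sum>y\<in>Zs q N. complex_of_real (?c y) * exp (?a * complex_of_real y))"
    unfolding t by (rule sums_sum) (rule exp_sums)
  then have "(\<Sum>k. (Mc q N T ^\<^sub>m k) $$ (0, d) / of_nat (fact k)) =
     (\<Sum>y\<in>Zs q N. complex_of_real (?c y) * exp (?a * complex_of_real y))"
    by (rule sums_unique[symmetric])
  then show ?thesis unfolding e .
qed




lemma persym:
  assumes sym: "\<forall>i \<le> 2 * n. q i = q (2 * n - i)"
    and root: "poly (Pp q (Suc (2*n))) y = 0"
  shows "k \<le> 2*n \<Longrightarrow> poly (Pp q (2*n - k)) y = poly (Pp q (2*n)) y * poly (Pp q k) y"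
proof (induction k rule: nat_less_induct)
  case (1 k)
  let ?s = "poly (Pp q (2*n)) y"
  show ?case
  proof (cases k)
    case 0 then show ?thesis by simp
  next
    case (Suc k1)
    show ?thesis
    proof (cases k1)
      case 0
      then have k: "k = 1" using Suc by simp
      then have n1: "2*n \<ge> 1" using "1.prems" by simp
      obtain j where j: "2*n = Suc j" using n1 by (cases "2*n") auto
      have "poly (Pp q (Suc (Suc j))) y = (y + q (Suc j)) * poly (Pp q (Suc j)) y - poly (Pp q j) y"
        by (rule Pp_rec)
      then have "poly (Pp q j) y = (y + q (Suc j)) * ?s" using root j by simp
      moreover have "q (Suc j) = q 0" using sym[rule_format, of 0] j by simp
      ultimately show ?thesis using k j by (simp add: algebra_simps)
    next
      case (Suc k2)
      then have k: "k = Suc (Suc k2)" using \<open>k = Suc k1\<close> by simp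
      define m where "m = 2*n - k"
      have m: "2*n - k2 = Suc (Suc m)" unfolding m_def using "1.prems" k by simp
      have IH1: "poly (Pp q (2*n - Suc k2)) y = ?s * poly (Pp q (Suc k2)) y"
        using "1.IH" k "1.prems" by simp
      have IH2: "poly (Pp q (2*n - k2)) y = ?s * poly (Pp q k2) y"
        using "1.IH" k "1.prems" by simp
      have e1: "2*n - Suc k2 = Suc m" using m by simp
      have e2: "2*n - k = m" using m k by simp
      have "poly (Pp q (Suc (Suc m))) y = (y + q (Suc m)) * poly (Pp q (Suc m)) y - poly (Pp q m) y"
        by (rule Pp_rec)
      moreover have "q (Suc m) = q (Suc k2)" using sym[rule_format, of "Suc k2"] e1 "1.prems" k by simp
      ultimately have "poly (Pp q m) y = (y + q (Suc k2)) * poly (Pp q (Suc m)) y - poly (Pp q (Suc (Suc m))) y"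
        by simp
      also have "\<dots> = ?s * ((y + q (Suc k2)) * poly (Pp q (Suc k2)) y - poly (Pp q k2) y)"
        using IH1 IH2 e1 m by (simp add: algebra_simps)
      also have "\<dots> = ?s * poly (Pp q k) y" using k by (simp add: Pp_rec algebra_simps)
      finally show ?thesis using e2 by simp
    qed
  qed
qed

lemma convex_eq:
  fixes w :: "'a \<Rightarrow> real" and z :: "'a \<Rightarrow> complex"
  assumes fin: "finite Z" and wp: "\<And>y. y \<in> Z \<Longrightarrow> w y > 0" and ws: "(\<Sum>y\<in>Z. w y) = 1"
    and zn: "\<And>y. y \<in> Z \<Longrightarrow> cmod (z y) = 1"
    and S: "S = (\<Sum>y\<in>Z. of_real (w y) * z y)" and Sn: "cmod S = 1"
  shows "y \<in> Z \<Longrightarrow> z y = S"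
proof -
  assume yZ: "y \<in> Z"
  define u where "u x = z x * cnj S" for x
  have nu: "cmod (u x) = 1" if "x \<in> Z" for x
    using zn[OF that] Sn unfolding u_def by (simp add: norm_mult)
  have le: "Re (u x) \<le> 1" if "x \<in> Z" for x
    using complex_Re_le_cmod[of "u x"] nu[OF that] by simp
  have SS: "S * cnj S = 1"
  proof -
    have "S * cnj S = complex_of_real ((cmod S)^2)" using complex_norm_square[of S] by simp
    then show ?thesis using Sn by simp
  qed
  have "S * cnj S = (\<Sum>x\<in>Z. of_real (w x) * u x)"
    unfolding S u_def by (simp add: sum_distrib_right mult.assoc)
  then have "(\<Sum>x\<in>Z. of_real (w x) * u x) = 1" using SS by simp
  then have "Re (\<Sum>x\<in>Z. of_real (w x) * u x) = 1" by simp
  then have "(\<Sum>x\<in>Z. w x * Re (u x)) = 1" by (simp add: Re_sum)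
  then have s0: "(\<Sum>x\<in>Z. w x * (1 - Re (u x))) = 0"
    using ws by (simp add: right_diff_distrib sum_subtractf)
  have nn: "\<forall>x\<in>Z. 0 \<le> w x * (1 - Re (u x))"
    using wp le by (simp add: less_imp_le)
  have "\<forall>x\<in>Z. w x * (1 - Re (u x)) = 0"
    using sum_nonneg_eq_0_iff[OF fin, of "\<lambda>x. w x * (1 - Re (u x))"] nn s0 by simp
  then have "w y * (1 - Re (u y)) = 0" using yZ by blast
  then have re1: "Re (u y) = 1" using wp[OF yZ] by simp
  have "(Re (u y))^2 + (Im (u y))^2 = (cmod (u y))^2" by (simp add: cmod_power2)
  then have "(Re (u y))^2 + (Im (u y))^2 = 1" using nu[OF yZ] by simp
  then have "Im (u y) = 0" using re1 by simp
  then have uu: "u y = 1" using re1 by (simp add: complex_eq_iff)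
  have "z y = z y * (S * cnj S)" using SS by simp
  also have "\<dots> = S * u y" unfolding u_def by (simp add: mult_ac)
  also have "\<dots> = S" using uu by simp
  finally show ?thesis .
qed

lemma expi_1: "exp (\<i> * complex_of_real th) = 1 \<Longrightarrow> \<exists>k::int. th = of_int (2*k) * pi"
proof -
  assume h: "exp (\<i> * complex_of_real th) = 1"
  have "cos th = 1" using arg_cong[OF h, of Re] by (simp add: cis_conv_exp[symmetric])
  then obtain x :: int where "th = real_of_int x * 2 * pi" using cos_one_2pi_int by blast
  then show ?thesis by (intro exI[of _ x]) simp
qed

lemma expi_m1: "exp (\<i> * complex_of_real th) = -1 \<Longrightarrow> \<exists>k::int. th = of_int (2*k+1) * pi"
proof -
  assume h: "exp (\<i> * complex_of_real th) = -1"
  have "exp (\<i> * complex_of_real (th + pi)) = exp (\<i> * complex_of_real th) * exp (\<i> * complex_of_real pi)"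
    by (simp add: distrib_left exp_add)
  also have "\<dots> = 1" using h by (simp add: exp_pi_i')
  finally obtain k :: int where "th + pi = of_int (2*k) * pi" using expi_1 by blast
  then have "th = of_int (2*(k-1)+1) * pi" by (simp add: algebra_simps)
  then show ?thesis by blast
qed

lemma final_int:
  fixes Ob Ii :: int
  assumes n: "n \<ge> 2" and odd: "odd Ob" and eq: "4^(n*(n+1)) * Ob^2 = 4^n * Ii^(n*(n+1))"
  shows False
proof -
  define e where "e = n*n - n"
  have nn2: "2*n \<le> n*n" using n by (rule mult_le_mono1)
  have nn: "n*n = n + e" unfolding e_def using nn2 by linarith
  have e1: "e \<ge> 1" unfolding e_def using n nn2 by linarith
  define M where "M = n*(n+1)"
  have M: "M = n + n*n" unfolding M_def by (simp add: algebra_simps)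
  have M1: "M \<ge> 1" using n M by simp
  have four: "(4::int)^k = 2^(2*k)" for k by (simp add: power_mult)
  have "(4::int)^M = 4^n * 4^(n*n)" unfolding M by (rule power_add)
  then have "4^n * (4^(n*n) * Ob^2) = 4^n * Ii^M" using eq unfolding M_def[symmetric] by (simp add: mult.assoc)
  then have eq2: "4^(n*n) * Ob^2 = Ii^M" by simp
  show False
  proof (cases "even Ii")
    case False
    then have "odd (Ii^M)" by simp
    moreover have "even ((4::int)^(n*n))" using n by (simp add: le_square)
    then have "even ((4::int)^(n*n) * Ob^2)" by simp
    ultimately show False using eq2 by simp
  next
    case True
    then obtain J where J: "Ii = 2*J" by blast
    have a1: "2*(n*n) = M + e" using nn M by simp
    have x1: "(4::int)^(n*n) = 2^M * 2^e" unfolding four a1 by (rule power_add)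
    have x2: "Ii^M = 2^M * J^M" unfolding J by (rule power_mult_distrib)
    have "2^M * (2^e * Ob^2) = (2::int)^M * J^M" using eq2 unfolding x1 x2 by (simp add: mult.assoc)
    then have eq3: "2^e * Ob^2 = J^M" by simp
    moreover have "even ((2::int)^e * Ob^2)" using e1 by simp
    ultimately have "even (J^M)" by simp
    then have "even J" using M1 by simp
    then obtain K where K: "J = 2*K" by blast
    have a2: "M = e + 2*n" using nn M by simp
    have x4: "(2::int)^M = 2^e * 2^(2*n)" unfolding a2 by (rule power_add)
    have x3: "J^M = 2^e * (2^(2*n) * K^M)"
      unfolding K power_mult_distrib x4 by (simp only: mult.assoc)
    have "2^e * Ob^2 = (2::int)^e * (2^(2*n) * K^M)" using eq3 x3 by simp
    then have "Ob^2 = 2^(2*n) * K^M" by simp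
    moreover have "even ((2::int)^(2*n) * K^M)" using n by simp
    ultimately have "even (Ob^2)" by simp
    then show False using odd by simp
  qed
qed




lemma poly_lin_prod: "poly (\<Prod>r\<in>S. [:-r, 1:]) x = (\<Prod>r\<in>S. x - (r::real))"
  by (simp add: poly_prod)

lemma resultant: "1 \<le> m \<Longrightarrow> (\<Prod>r\<in>Zs q m. poly (Pp q (m-1)) r)^2 = 1"
proof (induction m rule: nat_induct_at_least)
  case base
  then show ?case by simp
next
  case (Suc m)
  let ?A = "Zs q (Suc m)" and ?B = "Zs q m"
  have pm: "poly (Pp q m) r = (\<Prod>s\<in>?B. r - s)" for r
    by (subst Pp_split) (rule poly_lin_prod)
  have pSm: "poly (Pp q (Suc m)) s = (\<Prod>r\<in>?A. s - r)" for s
    by (subst Pp_split) (rule poly_lin_prod)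
  obtain m' where m': "m = Suc m'" using Suc by (cases m) auto
  have rec: "poly (Pp q (Suc m)) s = - poly (Pp q (m-1)) s" if "s \<in> ?B" for s
    using that m' Pp_rec[of q m' s] by (simp add: Zs_def)
  have "(\<Prod>r\<in>?A. poly (Pp q (Suc m - 1)) r)^2 = (\<Prod>r\<in>?A. (\<Prod>s\<in>?B. (r - s)^2))"
    by (simp add: pm prod_power_distrib)
  also have "\<dots> = (\<Prod>s\<in>?B. (\<Prod>r\<in>?A. (s - r)^2))"
    by (subst prod.swap) (simp add: power2_commute)
  also have "\<dots> = (\<Prod>s\<in>?B. poly (Pp q (Suc m)) s ^ 2)"
    by (simp add: pSm prod_power_distrib)
  also have "\<dots> = (\<Prod>s\<in>?B. poly (Pp q (m-1)) s ^ 2)"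
    using rec by (intro prod.cong) auto
  also have "\<dots> = (\<Prod>s\<in>?B. poly (Pp q (m-1)) s) ^ 2"
    by (simp add: prod_power_distrib)
  finally show ?case using Suc.IH by simp
qed

lemma coeff_lin_mult: "coeff ([:c, 1:] * p) (Suc j) = c * coeff p (Suc j) + coeff (p::real poly) j"
  by simp

lemma neg_fact:
  fixes U x :: complex
  assumes "- U = U * x" "U \<noteq> 0"
  shows "x = -1"
proof -
  have "U * (x + 1) = U * x + U" by (simp add: distrib_left)
  also have "\<dots> = - U + U" using assms(1) by simp
  also have "\<dots> = 0" by simp
  finally have "x + 1 = 0" using assms(2) by simp
  then show ?thesis by (simp add: eq_neg_iff_add_eq_0)
qed

theorem theorem5:
  fixes n :: nat and q :: "nat \<Rightarrow> real"
  assumes "n \<ge> 2"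
    and "\<forall>i \<le> 2 * n. q i = q (2 * n - i)"
  shows "\<not> (\<exists>T :: real.
           cmod (transition (path_adj (2 * n + 1) - potential (2 * n + 1) q) T $$ (0, 2 * n)) = 1)"
proof
  assume "\<exists>T :: real. cmod (transition (path_adj (2 * n + 1) - potential (2 * n + 1) q) T $$ (0, 2 * n)) = 1"
  then obtain T where hT: "cmod (transition (Hm q (Suc (2*n))) T $$ (0, 2 * n)) = 1"
    unfolding Hm_def by auto
  note n2 = assms(1) and sym = assms(2)
  define N where "N = Suc (2*n)"
  define Z where "Z = Zs q N"
  define sg where "sg y = poly (Pp q (2*n)) y" for y
  define c where "c y = 1 / poly (pderiv (Pp q N)) y" for y
  define U where "U = transition (Hm q N) T $$ (0, 2 * n)"
  define E where "E y = exp (\<i> * complex_of_real (T * y))" for y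
  have U1: "cmod U = 1" using hT unfolding U_def N_def .
  have Uf: "U = (\<Sum>y\<in>Z. complex_of_real (c y) * E y)"
    unfolding U_def Z_def c_def E_def using corner_formula[of N "2*n" q T] N_def by (simp add: mult.assoc)
  have finZ: "finite Z" unfolding Z_def by (rule Zs_finite)
  have cardZ: "card Z = Suc (2*n)" unfolding Z_def N_def by (rule Zs_card)
  have rootZ: "poly (Pp q (Suc (2*n))) y = 0" if "y \<in> Z" for y
    using that unfolding Z_def Zs_def N_def by simp
  have ps: "poly (Pp q (2*n - k)) y = sg y * poly (Pp q k) y" if "y \<in> Z" "k \<le> 2*n" for y k
    unfolding sg_def using persym[OF sym rootZ[OF that(1)] that(2)] .
  have sg2: "sg y = 1 \<or> sg y = -1" if "y \<in> Z" for y
  proof -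
    have "(sg y)^2 = 1" using ps[OF that, of "2*n"] by (simp add: sg_def power2_eq_square)
    then show ?thesis by (simp add: power2_eq_1_iff)
  qed
  have wpos: "sg y * c y > 0" if "y \<in> Z" for y
  proof -
    have "poly (pderiv (Pp q N)) y * sg y > 0"
      using Pp_root_deriv[OF rootZ[OF that]] unfolding sg_def N_def by simp
    then show ?thesis unfolding c_def by (auto simp: zero_less_mult_iff zero_less_divide_iff)
  qed
  have wsum: "(\<Sum>y\<in>Z. sg y * c y) = 1"
  proof -
    have "(\<Sum>y\<in>Z. poly (Pp q (2*n)) y / poly (pderiv (\<Prod>r\<in>Z. [:-r, 1:])) y) = coeff (Pp q (2*n)) (2*n)"
      by (rule dd_lemma[OF finZ cardZ]) (simp add: Pp_deg)
    then show ?thesis using Pp_deg[of q "2*n"] Pp_split[of q N]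
      unfolding sg_def c_def Z_def by simp
  qed
  have Uw: "U = (\<Sum>y\<in>Z. complex_of_real (sg y * c y) * (complex_of_real (sg y) * E y))"
    unfolding Uf
  proof (intro sum.cong refl)
    fix y assume "y \<in> Z"
    then have "sg y * sg y = 1" using sg2[OF \<open>y \<in> Z\<close>] by auto
    then have "c y = sg y * c y * sg y" by (simp add: mult_ac)
    then show "complex_of_real (c y) * E y = complex_of_real (sg y * c y) * (complex_of_real (sg y) * E y)"
      by (metis mult.assoc of_real_mult)
  qed
  have En: "cmod (E y) = 1" for y unfolding E_def
    by (metis cis_conv_exp norm_cis)
  have zn: "cmod (complex_of_real (sg y) * E y) = 1" if "y \<in> Z" for y
    using sg2[OF that] En[of y] by (auto simp: norm_mult)
  have allU: "complex_of_real (sg y) * E y = U" if "y \<in> Z" for y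
    by (rule convex_eq[OF finZ _ wsum zn Uw U1 that]) (use wpos in auto)
  define Zp where "Zp = {y\<in>Z. sg y = 1}"
  define Zm where "Zm = {y\<in>Z. sg y = -1}"
  define R where "R = Pp q (Suc n) - Pp q (n-1)"
  obtain m0 where m0: "n = Suc (Suc m0)" using n2 by (metis add_2_eq_Suc le_Suc_ex)
  have Zm_sub: "Zm \<subseteq> Zs q n"
  proof
    fix y assume y: "y \<in> Zm"
    then have "poly (Pp q (2*n - n)) y = sg y * poly (Pp q n) y" using ps[of y n] unfolding Zm_def by simp
    then show "y \<in> Zs q n" using y unfolding Zm_def Zs_def by simp
  qed
  have Zp_sub: "Zp \<subseteq> {x. poly R x = 0}"
  proof
    fix y assume y: "y \<in> Zp"
    then have "poly (Pp q (2*n - (n-1))) y = sg y * poly (Pp q (n-1)) y" using ps[of y "n-1"] unfolding Zp_def by simp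
    moreover have "2*n - (n-1) = Suc n" using m0 by simp
    ultimately show "y \<in> {x. poly R x = 0}" using y unfolding Zp_def R_def by simp
  qed
  have Rdeg: "degree R = Suc n \<and> coeff R (Suc n) = 1"
  proof -
    have "degree (Pp q (n-1)) < degree (Pp q (Suc n))" using Pp_deg[of q "n-1"] Pp_deg[of q "Suc n"] by simp
    then have "degree R = degree (Pp q (Suc n))" unfolding R_def diff_conv_add_uminus
      by (subst degree_add_eq_left) auto
    moreover have "coeff R (Suc n) = 1" unfolding R_def using Pp_deg[of q "Suc n"] Pp_deg[of q "n-1"]
      by (simp add: coeff_eq_0)
    ultimately show ?thesis using Pp_deg[of q "Suc n"] by simp
  qed
  have Rnz: "R \<noteq> 0" using Rdeg by auto
  have cZm: "card Zm \<le> n" using card_mono[OF Zs_finite Zm_sub] Zs_card[of q n] by simp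
  have cZp: "card Zp \<le> Suc n"
    using card_mono[OF poly_roots_finite[OF Rnz] Zp_sub] card_poly_roots_bound[OF Rnz] Rdeg by simp
  have Zun: "Z = Zp \<union> Zm" unfolding Zp_def Zm_def using sg2 by auto
  have Zdis: "Zp \<inter> Zm = {}" unfolding Zp_def Zm_def by auto
  have finZp: "finite Zp" and finZm: "finite Zm" using finZ unfolding Zp_def Zm_def by auto
  have "card Z = card Zp + card Zm" unfolding Zun using card_Un_disjoint[OF finZp finZm Zdis] .
  then have cp: "card Zp = Suc n" and cm: "card Zm = n" using cardZ cZm cZp by linarith+
  have ZmZs: "Zm = Zs q n" using card_subset_eq[OF Zs_finite Zm_sub] cm Zs_card[of q n] by simp
  have Pn_split: "Pp q n = (\<Prod>r\<in>Zm. [:-r, 1:])" unfolding ZmZs by (rule Pp_split)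
  have R_split: "R = (\<Prod>r\<in>Zp. [:-r, 1:])"
    using Rdeg cp Zp_sub by (intro monic_split[OF finZp]) auto
  define A where "A = (\<Sum>y\<in>Zp. y)"
  define B where "B = (\<Sum>y\<in>Zm. y)"
  define A2 where "A2 = (\<Sum>y\<in>Zp. y^2)"
  define B2 where "B2 = (\<Sum>y\<in>Zm. y^2)"
  have rec: "Pp q (Suc n) = [:q n, 1:] * Pp q n - Pp q (n-1)"
    unfolding m0 diff_Suc_1 by (rule Pp.simps(3))
  have cR: "coeff R j = coeff ([:q n, 1:] * Pp q n) j - 2 * coeff (Pp q (n-1)) j" for j
    unfolding R_def rec coeff_diff by simp
  have cpm: "card Zp = Suc (Suc (Suc m0))" "card Zm = Suc (Suc m0)" using cp cm m0 by auto
  have pn1: "coeff (Pp q n) (Suc m0) = - B"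
    unfolding Pn_split B_def by (rule prod_lin_coeff1[OF finZm cpm(2)])
  have pn2: "coeff (Pp q n) m0 = (B^2 - B2) / 2"
    unfolding Pn_split B_def B2_def by (rule prod_lin_coeff2[OF finZm cpm(2)])
  have pn0: "coeff (Pp q n) (Suc (Suc m0)) = 1"
  proof -
    have "coeff (Pp q n) n = 1" using Pp_deg[of q n] by blast
    then show ?thesis by (simp only: m0)
  qed
  have r1: "coeff R (Suc (Suc m0)) = - A"
    unfolding R_split A_def using prod_lin_coeff1[OF finZp] cpm(1) by simp
  have r2: "coeff R (Suc m0) = (A^2 - A2) / 2"
    unfolding R_split A_def A2_def using prod_lin_coeff2[OF finZp] cpm(1) by simp
  have nm1: "n - 1 = Suc m0" using m0 by simp
  have m1a: "coeff (Pp q (n-1)) (Suc (Suc m0)) = 0"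
  proof -
    have "degree (Pp q (n-1)) < Suc (Suc m0)" using Pp_deg[of q "n-1"] m0 by simp
    then show ?thesis by (rule coeff_eq_0)
  qed
  have m1b: "coeff (Pp q (n-1)) (Suc m0) = 1"
  proof -
    have "coeff (Pp q (n-1)) (n-1) = 1" using Pp_deg[of q "n-1"] by blast
    then show ?thesis by (simp only: nm1)
  qed
  have eq1: "- A = q n - B"
    using cR[of "Suc (Suc m0)"] r1 coeff_lin_mult[of "q n" "Pp q n" "Suc m0"] pn0 pn1 m1a by simp
  have eq2: "(A^2 - A2) / 2 = q n * (- B) + (B^2 - B2) / 2 - 2"
    using cR[of "Suc m0"] r2 coeff_lin_mult[of "q n" "Pp q n" m0] pn1 pn2 m1b by simp
  have qn: "q n = B - A" using eq1 by simp
  have key: "A2 - B2 - (A - B)^2 = 4"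
  proof -
    have "A^2 - A2 = 2 * (q n * (- B)) + (B^2 - B2) - 4" using eq2 by simp
    then have "A^2 - A2 = 2 * ((B - A) * (- B)) + (B^2 - B2) - 4" unfolding qn .
    then show ?thesis by (simp add: algebra_simps power2_eq_square)
  qed
  have UnZ: "U \<noteq> 0" using U1 by auto
  have Ep: "E y = U" if "y \<in> Zp" for y using allU[of y] that unfolding Zp_def by simp
  have Em: "E y = - U" if "y \<in> Zm" for y
  proof -
    have "- E y = U" using allU[of y] that unfolding Zm_def by simp
    then show ?thesis by (metis minus_minus)
  qed
  have "Zp \<noteq> {}" using cp by auto
  then obtain s0 where s0: "s0 \<in> Zp" by blast
  have Ediv: "E y = E s0 * exp (\<i> * complex_of_real (T * (y - s0)))" for y
  proof -
    have "\<i> * complex_of_real (T * y) = \<i> * complex_of_real (T * s0) + \<i> * complex_of_real (T * (y - s0))"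
      by (simp add: algebra_simps)
    then show ?thesis unfolding E_def by (simp only: exp_add)
  qed
  have kp: "\<exists>k::int. T * (y - s0) = of_int (2*k) * pi" if "y \<in> Zp" for y
  proof (rule expi_1)
    have "U = U * exp (\<i> * complex_of_real (T * (y - s0)))" using Ediv[of y] Ep[OF that] Ep[OF s0] by simp
    then show "exp (\<i> * complex_of_real (T * (y - s0))) = 1" using UnZ by simp
  qed
  have km: "\<exists>k::int. T * (y - s0) = of_int (2*k+1) * pi" if "y \<in> Zm" for y
  proof (rule expi_m1)
    have "- U = U * exp (\<i> * complex_of_real (T * (y - s0)))" using Ediv[of y] Em[OF that] Ep[OF s0] by metis
    then show "exp (\<i> * complex_of_real (T * (y - s0))) = -1" using UnZ by (rule neg_fact)
  qed
  define mi where "mi y = (if y \<in> Zp then 2 * (SOME k::int. T * (y - s0) = of_int (2*k) * pi)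
      else 2 * (SOME k::int. T * (y - s0) = of_int (2*k+1) * pi) + 1)" for y
  have mip: "T * (y - s0) = of_int (mi y) * pi \<and> even (mi y)" if "y \<in> Zp" for y
    using someI_ex[OF kp[OF that]] that unfolding mi_def by simp
  have mim: "T * (y - s0) = of_int (mi y) * pi \<and> odd (mi y)" if "y \<in> Zm" for y
  proof -
    have "y \<notin> Zp" using that Zdis by auto
    then show ?thesis using someI_ex[OF km[OF that]] unfolding mi_def by simp
  qed
  have miZ: "T * (y - s0) = of_int (mi y) * pi" if "y \<in> Z" for y
    using that mip mim Zun by blast
  have "Zm \<noteq> {}" using cm n2 by auto
  then obtain y1 where y1: "y1 \<in> Zm" by blast
  have T0: "T \<noteq> 0"
  proof
    assume "T = 0"
    then have "of_int (mi y1) * pi = 0" using mim[OF y1] by simp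
    then have "mi y1 = 0" by simp
    then show False using mim[OF y1] by simp
  qed
  define t where "t = pi / T"
  have yrep: "y = s0 + t * of_int (mi y)" if "y \<in> Z" for y
  proof -
    have "y - s0 = of_int (mi y) * pi / T" using miZ[OF that] T0 by (simp add: field_simps)
    then show ?thesis unfolding t_def by (simp add: field_simps)
  qed
  have ysq: "y^2 = s0^2 + 2 * s0 * t * of_int (mi y) + t^2 * (of_int (mi y))^2" if "y \<in> Z" for y
  proof -
    define m where "m = real_of_int (mi y)"
    have "y = s0 + t * m" using yrep[OF that] unfolding m_def .
    then show ?thesis unfolding m_def[symmetric] by (simp add: power2_eq_square algebra_simps)
  qed
  have ZpZ: "Zp \<subseteq> Z" and ZmZ: "Zm \<subseteq> Z" using Zun by auto
  define Ma where "Ma = (\<Sum>y\<in>Zp. real_of_int (mi y))"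
  define Mb where "Mb = (\<Sum>y\<in>Zm. real_of_int (mi y))"
  define Qa where "Qa = (\<Sum>y\<in>Zp. (real_of_int (mi y))^2)"
  define Qb where "Qb = (\<Sum>y\<in>Zm. (real_of_int (mi y))^2)"
  have hA: "A = real (Suc n) * s0 + t * Ma"
  proof -
    have "A = (\<Sum>y\<in>Zp. s0 + t * of_int (mi y))" unfolding A_def by (intro sum.cong refl) (use yrep ZpZ in blast)
    then show ?thesis unfolding Ma_def by (simp add: sum.distrib sum_distrib_left cp)
  qed
  have hB: "B = real n * s0 + t * Mb"
  proof -
    have "B = (\<Sum>y\<in>Zm. s0 + t * of_int (mi y))" unfolding B_def by (intro sum.cong refl) (use yrep ZmZ in blast)
    then show ?thesis unfolding Mb_def by (simp add: sum.distrib sum_distrib_left cm)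
  qed
  have hA2: "A2 = real (Suc n) * s0^2 + 2 * s0 * t * Ma + t^2 * Qa"
  proof -
    have "A2 = (\<Sum>y\<in>Zp. s0^2 + 2 * s0 * t * of_int (mi y) + t^2 * (of_int (mi y))^2)"
      unfolding A2_def by (intro sum.cong refl) (use ysq ZpZ in blast)
    then show ?thesis unfolding Ma_def Qa_def by (simp add: sum.distrib sum_distrib_left cp)
  qed
  have hB2: "B2 = real n * s0^2 + 2 * s0 * t * Mb + t^2 * Qb"
  proof -
    have "B2 = (\<Sum>y\<in>Zm. s0^2 + 2 * s0 * t * of_int (mi y) + t^2 * (of_int (mi y))^2)"
      unfolding B2_def by (intro sum.cong refl) (use ysq ZmZ in blast)
    then show ?thesis unfolding Mb_def Qb_def by (simp add: sum.distrib sum_distrib_left cm)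
  qed
  have "A2 - B2 - (A - B)^2 = t^2 * (Qa - Qb - (Ma - Mb)^2)"
    unfolding hA hB hA2 hB2 by (simp add: power2_eq_square algebra_simps)
  then have tQ: "t^2 * (Qa - Qb - (Ma - Mb)^2) = 4" using key by simp
  define Ii where "Ii = (\<Sum>y\<in>Zp. (mi y)^2) - (\<Sum>y\<in>Zm. (mi y)^2) - ((\<Sum>y\<in>Zp. mi y) - (\<Sum>y\<in>Zm. mi y))^2"
  have IiQ: "real_of_int Ii = Qa - Qb - (Ma - Mb)^2"
    unfolding Ii_def Qa_def Qb_def Ma_def Mb_def by simp
  have tI: "t^2 * real_of_int Ii = 4" using tQ IiQ by simp
  define X where "X = (\<Prod>v\<in>Zm. poly R v)"
  have Rn: "poly R v = -2 * poly (Pp q (n-1)) v" if "v \<in> Zm" for v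
  proof -
    have z: "poly (Pp q n) v = 0" using Zm_sub that unfolding Zs_def by auto
    have "poly R v = poly (Pp q (Suc n)) v - poly (Pp q (n-1)) v" unfolding R_def by simp
    also have "poly (Pp q (Suc n)) v = (v + q n) * poly (Pp q n) v - poly (Pp q (n-1)) v"
      unfolding rec by (simp add: algebra_simps)
    finally show ?thesis using z by simp
  qed
  have X2: "X^2 = 4^n"
  proof -
    have "X^2 = (\<Prod>v\<in>Zm. (poly R v)^2)" unfolding X_def by (rule prod_power_distrib)
    also have "\<dots> = (\<Prod>v\<in>Zm. 4 * (poly (Pp q (n-1)) v)^2)"
      using Rn by (intro prod.cong refl) (simp add: power2_eq_square)
    also have "\<dots> = 4^n * (\<Prod>v\<in>Zm. poly (Pp q (n-1)) v)^2"
      by (simp add: prod.distrib cm prod_power_distrib)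
    also have "(\<Prod>v\<in>Zm. poly (Pp q (n-1)) v)^2 = 1"
      unfolding ZmZs using resultant[of n q] n2 by simp
    finally show ?thesis by simp
  qed
  have diffrep: "v - u = t * of_int (mi v - mi u)" if "v \<in> Z" "u \<in> Z" for v u
  proof -
    have e1: "v = s0 + t * of_int (mi v)" using yrep[OF that(1)] .
    have e2: "u = s0 + t * of_int (mi u)" using yrep[OF that(2)] .
    have "v - u = (s0 + t * of_int (mi v)) - (s0 + t * of_int (mi u))" using e1 e2 by linarith
    also have "\<dots> = t * of_int (mi v - mi u)" by (simp add: algebra_simps)
    finally show ?thesis .
  qed
  define Ob where "Ob = (\<Prod>v\<in>Zm. \<Prod>u\<in>Zp. (mi v - mi u))"
  have Rp: "poly R v = t^(Suc n) * of_int (\<Prod>u\<in>Zp. (mi v - mi u))" if "v \<in> Zm" for v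
  proof -
    have "poly R v = (\<Prod>u\<in>Zp. v - u)" unfolding R_split by (rule poly_lin_prod)
    also have "\<dots> = (\<Prod>u\<in>Zp. t * of_int (mi v - mi u))"
      using diffrep that ZmZ ZpZ by (intro prod.cong refl) blast
    also have "\<dots> = t^(Suc n) * of_int (\<Prod>u\<in>Zp. (mi v - mi u))"
      by (simp add: prod.distrib cp)
    finally show ?thesis .
  qed
  have Xt: "X = t^(n*(n+1)) * of_int Ob"
  proof -
    have "X = (\<Prod>v\<in>Zm. t^(Suc n) * of_int (\<Prod>u\<in>Zp. (mi v - mi u)))"
      unfolding X_def using Rp by (intro prod.cong refl) blast
    also have "\<dots> = (t^(Suc n))^n * of_int Ob"
      unfolding Ob_def by (simp add: prod.distrib cm)
    also have "(t^(Suc n))^n = t^(n*(n+1))"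
    proof -
      have "Suc n * n = n*(n+1)" by simp
      then show ?thesis by (metis power_mult)
    qed
    finally show ?thesis .
  qed
  have Obodd: "odd Ob"
  proof -
    have "\<forall>v\<in>Zm. \<forall>u\<in>Zp. odd (mi v - mi u)" using mip mim by auto
    then show ?thesis unfolding Ob_def using finZm finZp by (simp add: even_prod_iff)
  qed
  define M where "M = n*(n+1)"
  have "(t^M * real_of_int Ob)^2 = 4^n" using X2 Xt unfolding M_def by simp
  then have "(t^2)^M * (real_of_int Ob)^2 = 4^n" by (simp add: power_mult_distrib power_mult[symmetric] mult.commute)
  then have "(t^2)^M * (real_of_int Ob)^2 * (real_of_int Ii)^M = 4^n * (real_of_int Ii)^M" by simp
  then have "(t^2 * real_of_int Ii)^M * (real_of_int Ob)^2 = 4^n * (real_of_int Ii)^M"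
    by (simp add: power_mult_distrib mult_ac)
  then have "4^M * (real_of_int Ob)^2 = 4^n * (real_of_int Ii)^M" unfolding tI .
  then have "real_of_int (4^M * Ob^2) = real_of_int (4^n * Ii^M)" by simp
  then have "4^M * Ob^2 = 4^n * Ii^M" by (simp only: of_int_eq_iff)
  then have "4^(n*(n+1)) * Ob^2 = 4^n * Ii^(n*(n+1))" unfolding M_def .
  then show False by (rule final_int[OF n2 Obodd])
qed


end
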